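(* Let $K\in\mathbb{E}_{Büchi}$ and let $\dot-$ be a contraction function on $K$. Then $\dot-$ is rational and remains in $\mathbb{E}_{Büchi}$ if and only if $\dot-=\dot-_\gamma$ for some Büchi choice function $\gamma$.
   Context: Fix a finite nonempty $AP$. LTL formulae $\varphi::=\bot\mid p\mid\neg\varphi\mid\varphi\lor\varphi\mid X\varphi\mid\varphi U\varphi$ with standard semantics on traces in $(2^{AP})^\omega$; $\mathrm{Cn}_{LTL}(X)$ = formulae satisfied by every (finite) Kripke structure all of whose traces satisfy all of $X$; $\varphi\equiv\psi$ iff $\mathrm{Cn}_{LTL}(\{\varphi\})=\mathrm{Cn}_{LTL}(\{\psi\})$; $K+\varphi:=\mathrm{Cn}_{LTL}(K\cup\{\varphi\})$. Büchi automata over $2^{AP}$ (runs from initial states visiting recurrence states infinitely often), language $\mathcal{L}(A)$, $\mathrm{supp}(A):=\{\varphi\mid\pi\models\varphi\ \forall\pi\in\mathcal{L}(A)\}$; $\mathbb{E}_{Büchi}:=\{\mathrm{supp}(A)\mid A$ Büchi automaton$\}$. A contraction function on theory $K$ maps each formula $\varphi$ to $K\dot-\varphi$; rational means: (K1) $K\dot-\varphi=\mathrm{Cn}_{LTL}(K\dot-\varphi)$; (K2) $K\dot-\varphi\subseteq K$; (K3) $\varphi\notin K\Rightarrow K\dot-\varphi=K$; (K4) $\varphi\notin\mathrm{Cn}_{LTL}(\emptyset)\Rightarrow\varphi\notin K\dot-\varphi$; (K5) $K\subseteq(K\dot-\varphi)+\varphi$; (K6) $\varphi\equiv\psi\Rightarrow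 K\dot-\varphi=K\dot-\psi$. It remains in $\mathbb{E}_{Büchi}$ if all values lie in $\mathbb{E}_{Büchi}$. A Büchi choice function $\gamma$ maps each LTL formula to a Büchi automaton such that (BF1) $\mathcal{L}(\gamma(\varphi))\neq\emptyset$; (BF2) if $\varphi$ is not a tautology then $\neg\varphi\in\mathrm{supp}(\gamma(\varphi))$; (BF3) if $\varphi\equiv\psi$ then $\mathcal{L}(\gamma(\varphi))=\mathcal{L}(\gamma(\psi))$. The Büchi contraction function induced by $\gamma$ on $K$ is $K\dot-_\gamma\varphi:=K\cap\mathrm{supp}(\gamma(\varphi))$ if $\varphi\notin\mathrm{Cn}_{LTL}(\emptyset)$ and $\varphi\in K$, and $K\dot-_\gamma\varphi:=K$ otherwise. *)

theory Defs
  imports Main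
begin

datatype 'ap ltl =
    LBot
  | LProp 'ap
  | LNeg "'ap ltl"
  | LOr "'ap ltl" "'ap ltl"
  | LNext "'ap ltl"
  | LUntil "'ap ltl" "'ap ltl"

type_synonym 'ap trace = "nat \<Rightarrow> 'ap set"

definition suffix :: "nat \<Rightarrow> 'ap trace \<Rightarrow> 'ap trace" where
  "suffix i \<pi> = (\<lambda>j. \<pi> (i + j))"

fun sat :: "'ap trace \<Rightarrow> 'ap ltl \<Rightarrow> bool" where
  "sat \<pi> LBot = False"
| "sat \<pi> (LProp p) = (p \<in> \<pi> 0)"
| "sat \<pi> (LNeg \<phi>) = (\<not> sat \<pi> \<phi>)"
| "sat \<pi> (LOr \<phi> \<psi>) = (sat \<pi> \<phi> \<or> sat \<pi> \<psi>)"
| "sat \<pi> (LNext \<phi>) = sat (suffix 1 \<pi>) \<phi>"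
| "sat \<pi> (LUntil \<phi> \<psi>) =
     (\<exists>k. sat (suffix k \<pi>) \<psi> \<and> (\<forall>j<k. sat (suffix j \<pi>) \<phi>))"

definition tautology :: "'ap ltl \<Rightarrow> bool" where
  "tautology \<phi> = (\<forall>\<pi>. sat \<pi> \<phi>)"

record 'ap kripke =
  kstates :: "nat set"
  kinit   :: "nat set"
  ktrans  :: "(nat \<times> nat) set"
  klabel  :: "nat \<Rightarrow> 'ap set"

definition kripke_wf :: "'ap kripke \<Rightarrow> bool" where
  "kripke_wf M = (finite (kstates M) \<and> kinit M \<subseteq> kstates M
     \<and> ktrans M \<subseteq> kstates M \<times> kstates M
     \<and> (\<forall>s\<in>kstates M. \<exists>t. (s, t) \<in> ktrans M))"

definition ktraces :: "'ap kripke \<Rightarrow> 'ap trace set" where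
  "ktraces M = {klabel M \<circ> \<rho> | \<rho>. \<rho> 0 \<in> kinit M \<and> (\<forall>i. (\<rho> i, \<rho> (Suc i)) \<in> ktrans M)}"

definition kmodels :: "'ap kripke \<Rightarrow> 'ap ltl \<Rightarrow> bool" where
  "kmodels M \<phi> = (\<forall>\<pi>\<in>ktraces M. sat \<pi> \<phi>)"

definition Cn :: "'ap ltl set \<Rightarrow> 'ap ltl set" where
  "Cn X = {\<phi>. \<forall>M. kripke_wf M \<and> (\<forall>\<psi>\<in>X. kmodels M \<psi>) \<longrightarrow> kmodels M \<phi>}"

definition ltl_equiv :: "'ap ltl \<Rightarrow> 'ap ltl \<Rightarrow> bool" where
  "ltl_equiv \<phi> \<psi> = (Cn {\<phi>} = Cn {\<psi>})"

definition expansion :: "'ap ltl set \<Rightarrow> 'ap ltl \<Rightarrow> 'ap ltl set" where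
  "expansion K \<phi> = Cn (K \<union> {\<phi>})"

record 'ap buchi =
  bstates :: "nat set"
  binit   :: "nat set"
  btrans  :: "(nat \<times> 'ap set \<times> nat) set"
  bacc    :: "nat set"

definition buchi_wf :: "'ap buchi \<Rightarrow> bool" where
  "buchi_wf A = (finite (bstates A) \<and> binit A \<subseteq> bstates A \<and> bacc A \<subseteq> bstates A
     \<and> btrans A \<subseteq> bstates A \<times> UNIV \<times> bstates A)"

definition lang :: "'ap buchi \<Rightarrow> 'ap trace set" where
  "lang A = {w. \<exists>\<rho>. \<rho> 0 \<in> binit A \<and> (\<forall>i. (\<rho> i, w i, \<rho> (Suc i)) \<in> btrans A)
                 \<and> (\<exists>\<^sub>\<infinity>i. \<rho> i \<in> bacc A)}"

definition supp :: "'ap buchi \<Rightarrow> 'ap ltl set" where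
  "supp A = {\<phi>. \<forall>\<pi>\<in>lang A. sat \<pi> \<phi>}"

definition E_Buchi :: "'ap ltl set set" where
  "E_Buchi = {supp A | A. buchi_wf A}"

definition rational_contraction :: "'ap ltl set \<Rightarrow> ('ap ltl \<Rightarrow> 'ap ltl set) \<Rightarrow> bool" where
  "rational_contraction K c =
     ((\<forall>\<phi>. c \<phi> = Cn (c \<phi>))
    \<and> (\<forall>\<phi>. c \<phi> \<subseteq> K)
    \<and> (\<forall>\<phi>. \<phi> \<notin> K \<longrightarrow> c \<phi> = K)
    \<and> (\<forall>\<phi>. \<phi> \<notin> Cn {} \<longrightarrow> \<phi> \<notin> c \<phi>)
    \<and> (\<forall>\<phi>. K \<subseteq> expansion (c \<phi>) \<phi>)
    \<and> (\<forall>\<phi> \<psi>. ltl_equiv \<phi> \<psi> \<longrightarrow> c \<phi> = c \<psi>))"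

definition remains_in_E_Buchi :: "('ap ltl \<Rightarrow> 'ap ltl set) \<Rightarrow> bool" where
  "remains_in_E_Buchi c = (\<forall>\<phi>. c \<phi> \<in> E_Buchi)"

definition buchi_choice :: "('ap ltl \<Rightarrow> 'ap buchi) \<Rightarrow> bool" where
  "buchi_choice \<gamma> =
     ((\<forall>\<phi>. buchi_wf (\<gamma> \<phi>))
    \<and> (\<forall>\<phi>. lang (\<gamma> \<phi>) \<noteq> {})
    \<and> (\<forall>\<phi>. \<not> tautology \<phi> \<longrightarrow> LNeg \<phi> \<in> supp (\<gamma> \<phi>))
    \<and> (\<forall>\<phi> \<psi>. ltl_equiv \<phi> \<psi> \<longrightarrow> lang (\<gamma> \<phi>) = lang (\<gamma> \<psi>)))"

definition buchi_contraction ::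
  "'ap ltl set \<Rightarrow> ('ap ltl \<Rightarrow> 'ap buchi) \<Rightarrow> 'ap ltl \<Rightarrow> 'ap ltl set" where
  "buchi_contraction K \<gamma> \<phi> =
     (if \<phi> \<notin> Cn {} \<and> \<phi> \<in> K then K \<inter> supp (\<gamma> \<phi>) else K)"

end

theory Submission
  imports Defs "HOL-Library.Infinite_Set"
begin


lemma suffix_suffix[simp]: "suffix a (suffix b \<pi>) = suffix (b + a) \<pi>"
  by (simp add: suffix_def add.assoc)

lemma suffix_0[simp]: "suffix i \<pi> 0 = \<pi> i" by (simp add: suffix_def)

lemma sat_until_unfold:
  "sat \<pi> (LUntil x y) \<longleftrightarrow> sat \<pi> y \<or> (sat \<pi> x \<and> sat (suffix 1 \<pi>) (LUntil x y))"
proof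
  assume "sat \<pi> (LUntil x y)"
  then obtain k where k: "sat (suffix k \<pi>) y" "\<forall>j<k. sat (suffix j \<pi>) x" by auto
  show "sat \<pi> y \<or> (sat \<pi> x \<and> sat (suffix 1 \<pi>) (LUntil x y))"
  proof (cases k)
    case 0 then show ?thesis using k by (simp add: suffix_def)
  next
    case (Suc k')
    have "sat (suffix 0 \<pi>) x" using k Suc by auto
    hence "sat \<pi> x" by (simp add: suffix_def)
    moreover have "sat (suffix 1 \<pi>) (LUntil x y)"
      using k Suc by (auto intro!: exI[of _ k'])
    ultimately show ?thesis by simp
  qed
next
  assume "sat \<pi> y \<or> (sat \<pi> x \<and> sat (suffix 1 \<pi>) (LUntil x y))"
  then show "sat \<pi> (LUntil x y)"
  proof
    assume "sat \<pi> y" then show ?thesis by (auto intro!: exI[of _ 0] simp: suffix_def)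
  next
    assume h: "sat \<pi> x \<and> sat (suffix 1 \<pi>) (LUntil x y)"
    then obtain k where k: "sat (suffix (1+k) \<pi>) y" "\<forall>j<k. sat (suffix (1+j) \<pi>) x" by auto
    show ?thesis
    proof (simp, intro exI[of _ "Suc k"] conjI allI impI)
      show "sat (suffix (Suc k) \<pi>) y" using k by simp
      fix j assume "j < Suc k"
      then show "sat (suffix j \<pi>) x"
        using h k by (cases j) (auto simp: suffix_def)
    qed
  qed
qed

fun sfl :: "'a ltl \<Rightarrow> 'a ltl list" where
  "sfl LBot = [LBot]"
| "sfl (LProp p) = [LProp p]"
| "sfl (LNeg a) = LNeg a # sfl a"
| "sfl (LOr a b) = LOr a b # sfl a @ sfl b"
| "sfl (LNext a) = LNext a # sfl a"
| "sfl (LUntil a b) = LUntil a b # sfl a @ sfl b"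

definition sf :: "'a ltl \<Rightarrow> 'a ltl set" where "sf \<chi> = set (sfl \<chi>)"

lemma sf_self[simp]: "\<chi> \<in> sf \<chi>" by (cases \<chi>) (auto simp: sf_def)
lemma finite_sf[simp]: "finite (sf \<chi>)" by (simp add: sf_def)

lemma sf_trans: "\<psi> \<in> sf \<chi> \<Longrightarrow> sf \<psi> \<subseteq> sf \<chi>"
  by (induction \<chi>) (auto simp: sf_def)

lemma sf_sub:
  "LNeg a \<in> sf \<chi> \<Longrightarrow> a \<in> sf \<chi>"
  "LOr a b \<in> sf \<chi> \<Longrightarrow> a \<in> sf \<chi>" "LOr a b \<in> sf \<chi> \<Longrightarrow> b \<in> sf \<chi>"
  "LNext a \<in> sf \<chi> \<Longrightarrow> a \<in> sf \<chi>"
  "LUntil a b \<in> sf \<chi> \<Longrightarrow> a \<in> sf \<chi>" "LUntil a b \<in> sf \<chi> \<Longrightarrow> b \<in> sf \<chi>"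
  using sf_trans[of "LNeg a" \<chi>] sf_trans[of "LOr a b" \<chi>] sf_trans[of "LNext a" \<chi>]
    sf_trans[of "LUntil a b" \<chi>] sf_self[of a, unfolded sf_def] sf_self[of b, unfolded sf_def]
  by (auto simp: sf_def)

definition lf :: "nat \<Rightarrow> nat \<Rightarrow> nat \<Rightarrow> nat" where
  "lf i p k = (if k < i then k else i + (k - i) mod p)"

lemma lf_lt: "0 < p \<Longrightarrow> lf i p k < i + p"
  by (simp add: lf_def)

lemma lf_idem: "k < i + p \<Longrightarrow> lf i p k = k"
  by (simp add: lf_def)

lemma lf_0: "lf i p 0 = 0" by (simp add: lf_def)

lemma lf_Suc: "0 < p \<Longrightarrow> lf i p (Suc k) = (if Suc (lf i p k) = i + p then i else Suc (lf i p k))"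
proof (cases "Suc k < i")
  case True then show ?thesis by (simp add: lf_def)
next
  case False
  assume p: "0 < p"
  show ?thesis
  proof (cases "k < i")
    case True
    with False have "k = i - 1" "i > 0" by auto
    then show ?thesis using p by (auto simp: lf_def)
  next
    case False
    then have "Suc k - i = Suc (k - i)" by auto
    then show ?thesis using False p by (auto simp: lf_def mod_Suc)
  qed
qed

lemma lf_Suc_lf: "0 < p \<Longrightarrow> lf i p (Suc (lf i p k)) = lf i p (Suc k)"
proof -
  assume p: "0 < p"
  have "lf i p k < i + p" using lf_lt[OF p] .
  show ?thesis
  proof (cases "Suc (lf i p k) = i + p")
    case True
    have "lf i p (i + p) = i" using p by (simp add: lf_def)
    then show ?thesis using True lf_Suc[OF p, of i k] by simp
  next
    case False
    then have "Suc (lf i p k) < i + p" using \<open>lf i p k < i + p\<close> by simp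
    then show ?thesis using False lf_Suc[OF p, of i k] lf_idem by simp
  qed
qed

lemma lf_periodic: "i \<le> k \<Longrightarrow> lf i p (k + p) = lf i p k"
proof -
  assume "i \<le> k"
  then have "k + p - i = (k - i) + p" by auto
  then show ?thesis using \<open>i \<le> k\<close> by (simp add: lf_def del: add_diff_assoc2)
qed

lemma lf_hit: "i \<le> t \<Longrightarrow> t < i + p \<Longrightarrow> lf i p (t + l * p) = t"
proof -
  assume a: "i \<le> t" "t < i + p"
  then have "t + l * p - i = (t - i) + l * p" by auto
  moreover have "(t - i) mod p = t - i" using a by simp
  ultimately show ?thesis using a by (simp add: lf_def del: add_diff_assoc2)
qed

definition lasso :: "'a trace \<Rightarrow> bool" where
  "lasso w = (\<exists>i p. 0 < p \<and> (\<forall>k\<ge>i. w (k + p) = w k))"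

lemma lasso_lf:
  assumes p: "0 < p" and per: "\<forall>k\<ge>i. w (k + p) = w k"
  shows "w k = w (lf i p k)"
proof (cases "k < i")
  case True then show ?thesis by (simp add: lf_def)
next
  case False
  have gen: "\<And>l. w (r + l * p) = w r" if "r \<ge> i" for r
  proof -
    fix l show "w (r + l * p) = w r"
      proof (induction l)
        case (Suc l)
        have "w (r + Suc l * p) = w ((r + l * p) + p)" by (simp add: algebra_simps)
        also have "\<dots> = w (r + l * p)" using per that by simp
        finally show ?case using Suc by simp
      qed simp
  qed
  have "k = (i + (k - i) mod p) + ((k - i) div p) * p" using False
    by (metis add.assoc le_add_diff_inverse linorder_not_le mod_div_mult_eq)
  then have "w k = w (i + (k - i) mod p)" using gen[of "i + (k - i) mod p" "(k - i) div p"] by simp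
  then show ?thesis using False by (simp add: lf_def)
qed

lemma lasso_kripke:
  assumes "lasso w"
  shows "\<exists>M. kripke_wf M \<and> ktraces M = {w}"
proof -
  obtain i p where p: "0 < p" and per: "\<forall>k\<ge>i. w (k + p) = w k"
    using assms unfolding lasso_def by blast
  define M where "M = \<lparr>kstates = {..<i+p}, kinit = {0}, ktrans = {(n, lf i p (Suc n)) | n. n < i + p},
      klabel = w\<rparr>"
  have wf: "kripke_wf M" unfolding M_def kripke_wf_def using p lf_lt[OF p] by auto
  have "ktraces M = {w}"
  proof
    show "{w} \<subseteq> ktraces M"
    proof -
      have "w = klabel M \<circ> lf i p" using lasso_lf[OF p per] by (auto simp: M_def)
      moreover have "lf i p 0 \<in> kinit M" by (simp add: M_def lf_0)
      moreover have "\<forall>n. (lf i p n, lf i p (Suc n)) \<in> ktrans M"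
        using lf_lt[OF p] lf_Suc_lf[OF p] by (auto simp: M_def)
      ultimately show ?thesis unfolding ktraces_def by blast
    qed
  next
    show "ktraces M \<subseteq> {w}"
    proof
      fix \<pi> assume "\<pi> \<in> ktraces M"
      then obtain r where r: "\<pi> = klabel M \<circ> r" "r 0 \<in> kinit M" "\<forall>n. (r n, r (Suc n)) \<in> ktrans M"
        unfolding ktraces_def by blast
      have "r n = lf i p n" for n
      proof (induction n)
        case 0 then show ?case using r by (simp add: M_def lf_0)
      next
        case (Suc n)
        have "r (Suc n) = lf i p (Suc (r n))" using r(3) by (auto simp: M_def)
        then show ?case using Suc lf_Suc_lf[OF p] by simp
      qed
      then have "\<pi> = w \<circ> lf i p" using r by (auto simp: M_def)
      then show "\<pi> \<in> {w}" using lasso_lf[OF p per] by auto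
    qed
  qed
  then show ?thesis using wf by blast
qed

lemma lasso_Cn:
  assumes "lasso w" "\<forall>\<psi>\<in>X. sat w \<psi>" "\<phi> \<in> Cn X"
  shows "sat w \<phi>"
proof -
  obtain M where M: "kripke_wf M" "ktraces M = {w}" using lasso_kripke[OF assms(1)] by blast
  have "\<forall>\<psi>\<in>X. kmodels M \<psi>" using assms(2) M by (simp add: kmodels_def)
  then have "kmodels M \<phi>" using assms(3) M unfolding Cn_def by blast
  then show ?thesis using M by (simp add: kmodels_def)
qed

lemma Cn_incl: "X \<subseteq> Cn X" by (auto simp: Cn_def)



definition glang :: "'s set \<Rightarrow> ('s \<times> 'a set \<times> 's) set \<Rightarrow> 's set list \<Rightarrow> 'a trace set" where
  "glang I Tr Fs = {w. \<exists>\<rho>. \<rho> 0 \<in> I \<and> (\<forall>i. (\<rho> i, w i, \<rho> (Suc i)) \<in> Tr)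
      \<and> (\<forall>F\<in>set Fs. \<exists>\<^sub>\<infinity>i. \<rho> i \<in> F)}"

definition gfin :: "'s set \<Rightarrow> 's set \<Rightarrow> ('s \<times> 'a set \<times> 's) set \<Rightarrow> bool" where
  "gfin S I Tr = (finite S \<and> I \<subseteq> S \<and> (\<forall>s a s'. (s, a, s') \<in> Tr \<longrightarrow> s \<in> S \<and> s' \<in> S))"

lemma lang_glang: "lang A = glang (binit A) (btrans A) [bacc A]"
  by (simp add: lang_def glang_def)

lemma wf_gfin: "buchi_wf A \<Longrightarrow> gfin (bstates A) (binit A) (btrans A)"
  by (auto simp: buchi_wf_def gfin_def)

lemma run_in_S:
  assumes "gfin S I Tr" "\<rho> 0 \<in> I" "\<forall>i. (\<rho> i, w i, \<rho> (Suc i)) \<in> Tr"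
  shows "\<rho> i \<in> S"
proof (cases i)
  case (Suc j) then show ?thesis using assms(1) assms(3)[rule_format, of j] unfolding gfin_def by blast
qed (use assms in \<open>auto simp: gfin_def\<close>)

lemma to_nat:
  assumes g: "gfin S I Tr"
  shows "\<exists>A. buchi_wf A \<and> lang A = glang I Tr [F]"
proof -
  obtain f :: "_ \<Rightarrow> nat" and n where f: "inj_on f S" using finite_imp_inj_to_nat_seg g
    unfolding gfin_def by metis
  define A where "A = \<lparr>bstates = f ` S, binit = f ` I,
     btrans = {(f s, a, f s') | s a s'. (s, a, s') \<in> Tr}, bacc = f ` (F \<inter> S)\<rparr>"
  have wf: "buchi_wf A" using g unfolding A_def buchi_wf_def gfin_def by auto
  have "lang A = glang I Tr [F]"
  proof
    show "lang A \<subseteq> glang I Tr [F]"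
    proof
      fix w assume "w \<in> lang A"
      then obtain r where r: "r 0 \<in> f ` I" "\<forall>i. (r i, w i, r (Suc i)) \<in> btrans A"
         "\<exists>\<^sub>\<infinity>i. r i \<in> f ` (F \<inter> S)" unfolding lang_def A_def by auto
      have rS: "r i \<in> f ` S" for i
      proof (cases i)
        case 0 then show ?thesis using r g by (auto simp: A_def gfin_def)
      next
        case (Suc j)
        have "(r j, w j, r (Suc j)) \<in> {(f s, a, f s') | s a s'. (s, a, s') \<in> Tr}"
          using r(2) by (simp add: A_def)
        then obtain s a s' where "(r j, w j, r (Suc j)) = (f s, a, f s')" "(s, a, s') \<in> Tr"
          by (smt (verit) mem_Collect_eq)
        then have ss: "(s, w j, s') \<in> Tr" "f s' = r (Suc j)" by auto
        have "s' \<in> S" using g ss(1) unfolding gfin_def by blast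
        then show ?thesis using Suc ss(2) by (metis image_eqI)
      qed
      define \<rho> where "\<rho> i = inv_into S f (r i)" for i
      have fr: "f (\<rho> i) = r i" "\<rho> i \<in> S" for i using rS[of i] f
        by (auto simp: \<rho>_def f_inv_into_f inv_into_into)
      have "\<rho> 0 \<in> I"
      proof -
        obtain x where x: "x \<in> I" "r 0 = f x" using r(1) by blast
        have "x \<in> S" using x(1) g unfolding gfin_def by blast
        then have "\<rho> 0 = x" using inj_onD[OF f, of "\<rho> 0" x] fr[of 0] x(2) by simp
        then show ?thesis using x(1) by simp
      qed
      moreover have "(\<rho> i, w i, \<rho> (Suc i)) \<in> Tr" for i
      proof -
        have "(r i, w i, r (Suc i)) \<in> {(f s, a, f s') | s a s'. (s, a, s') \<in> Tr}"
          using r(2) by (simp add: A_def)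
        then obtain s a s' where "(r i, w i, r (Suc i)) = (f s, a, f s')" "(s, a, s') \<in> Tr"
          by (smt (verit) mem_Collect_eq)
        then have ss: "(s, w i, s') \<in> Tr" "f s = r i" "f s' = r (Suc i)" by auto
        moreover have "s \<in> S" "s' \<in> S" using g ss(1) unfolding gfin_def by blast+
        ultimately show ?thesis using fr[of i] fr[of "Suc i"] inj_onD[OF f]
          by metis
      qed
      moreover have "\<exists>\<^sub>\<infinity>i. \<rho> i \<in> F"
        using r(3)
      proof (rule INFM_mono)
        fix i assume "r i \<in> f ` (F \<inter> S)"
        then obtain x where "x \<in> F" "x \<in> S" "r i = f x" by blast
        then show "\<rho> i \<in> F" using inj_onD[OF f, of "\<rho> i" x] fr[of i] by simp
      qed
      ultimately show "w \<in> glang I Tr [F]" unfolding glang_def by auto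
    qed
  next
    show "glang I Tr [F] \<subseteq> lang A"
    proof
      fix w assume "w \<in> glang I Tr [F]"
      then obtain \<rho> where r: "\<rho> 0 \<in> I" "\<forall>i. (\<rho> i, w i, \<rho> (Suc i)) \<in> Tr" "\<exists>\<^sub>\<infinity>i. \<rho> i \<in> F"
        unfolding glang_def by auto
      have rS: "\<rho> i \<in> S" for i using run_in_S[OF g r(1,2)] .
      have "\<exists>\<^sub>\<infinity>i. f (\<rho> i) \<in> f ` (F \<inter> S)" using r(3)
        by (rule INFM_mono) (use rS in blast)
      moreover have "(f (\<rho> i), w i, f (\<rho> (Suc i))) \<in> btrans A" for i using r(2) by (auto simp: A_def)
      ultimately show "w \<in> lang A" using r(1) unfolding lang_def A_def
        by (auto intro!: exI[of _ "f \<circ> \<rho>"])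
    qed
  qed
  then show ?thesis using wf by blast
qed

definition univA :: "'a buchi" where
  "univA = \<lparr>bstates = {0}, binit = {0}, btrans = {(0, a, 0) | a. True}, bacc = {0}\<rparr>"

lemma univA_wf: "buchi_wf univA" by (auto simp: univA_def buchi_wf_def)
lemma univA_lang: "lang univA = UNIV"
  unfolding lang_def univA_def by (auto intro!: exI[of _ "\<lambda>_. 0::nat"])



lemma union_buchi:
  assumes "buchi_wf A1" "buchi_wf A2"
  shows "\<exists>A. buchi_wf A \<and> lang A = lang A1 \<union> lang A2"
proof -
  define S where "S = Inl ` bstates A1 \<union> Inr ` bstates A2"
  define I where "I = Inl ` binit A1 \<union> Inr ` binit A2"
  define Tr where "Tr = (\<lambda>(s, a, s'). (Inl s, a, Inl s')) ` btrans A1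
     \<union> (\<lambda>(s, a, s'). (Inr s, a, Inr s')) ` btrans A2"
  define F where "F = Inl ` bacc A1 \<union> Inr ` bacc A2"
  have g: "gfin S I Tr" using assms unfolding gfin_def S_def I_def Tr_def buchi_wf_def by auto
  have "glang I Tr [F] = lang A1 \<union> lang A2"
  proof
    show "glang I Tr [F] \<subseteq> lang A1 \<union> lang A2"
    proof
      fix w assume "w \<in> glang I Tr [F]"
      then obtain \<rho> where r: "\<rho> 0 \<in> I" "\<forall>i. (\<rho> i, w i, \<rho> (Suc i)) \<in> Tr" "\<exists>\<^sub>\<infinity>i. \<rho> i \<in> F"
        unfolding glang_def by auto
      show "w \<in> lang A1 \<union> lang A2"
      proof (cases "isl (\<rho> 0)")
        case True
        have L: "isl (\<rho> i)" for i
        proof (induction i)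
          case (Suc i) then show ?case using r(2)[rule_format, of i] by (auto simp: Tr_def)
        qed (use True in simp)
        define r1 where "r1 i = projl (\<rho> i)" for i
        have e: "\<rho> i = Inl (r1 i)" for i using L[of i] by (simp add: r1_def)
        have "r1 0 \<in> binit A1" using r(1) e[of 0] by (auto simp: I_def)
        moreover have "(r1 i, w i, r1 (Suc i)) \<in> btrans A1" for i
          using r(2)[rule_format, of i] e[of i] e[of "Suc i"] by (auto simp: Tr_def)
        moreover have "\<exists>\<^sub>\<infinity>i. r1 i \<in> bacc A1" using r(3)
          by (rule INFM_mono) (auto simp: F_def e)
        ultimately show ?thesis unfolding lang_def by auto
      next
        case False
        have L: "\<not> isl (\<rho> i)" for i
        proof (induction i)
          case (Suc i) then show ?case using r(2)[rule_format, of i] by (auto simp: Tr_def)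
        qed (use False in simp)
        define r1 where "r1 i = projr (\<rho> i)" for i
        have e: "\<rho> i = Inr (r1 i)" for i using L[of i] by (simp add: r1_def)
        have "r1 0 \<in> binit A2" using r(1) e[of 0] by (auto simp: I_def)
        moreover have "(r1 i, w i, r1 (Suc i)) \<in> btrans A2" for i
          using r(2)[rule_format, of i] e[of i] e[of "Suc i"] by (auto simp: Tr_def)
        moreover have "\<exists>\<^sub>\<infinity>i. r1 i \<in> bacc A2" using r(3)
          by (rule INFM_mono) (auto simp: F_def e)
        ultimately show ?thesis unfolding lang_def by auto
      qed
    qed
  next
    show "lang A1 \<union> lang A2 \<subseteq> glang I Tr [F]"
    proof
      fix w assume "w \<in> lang A1 \<union> lang A2"
      then show "w \<in> glang I Tr [F]"
      proof
        assume "w \<in> lang A1"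
        then obtain r where r: "r 0 \<in> binit A1" "\<forall>i. (r i, w i, r (Suc i)) \<in> btrans A1"
          "\<exists>\<^sub>\<infinity>i. r i \<in> bacc A1" unfolding lang_def by auto
        have "\<exists>\<^sub>\<infinity>i. Inl (r i) \<in> F" using r(3) by (rule INFM_mono) (auto simp: F_def)
        moreover have "(Inl (r i), w i, Inl (r (Suc i))) \<in> Tr" for i
          using r(2) unfolding Tr_def by (rule_tac UnI1) (rule image_eqI[where x="(r i, w i, r (Suc i))"], auto)
        ultimately show ?thesis using r(1) unfolding glang_def
          by (intro CollectI exI[of _ "Inl \<circ> r"]) (auto simp: I_def)
      next
        assume "w \<in> lang A2"
        then obtain r where r: "r 0 \<in> binit A2" "\<forall>i. (r i, w i, r (Suc i)) \<in> btrans A2"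
          "\<exists>\<^sub>\<infinity>i. r i \<in> bacc A2" unfolding lang_def by auto
        have "\<exists>\<^sub>\<infinity>i. Inr (r i) \<in> F" using r(3) by (rule INFM_mono) (auto simp: F_def)
        moreover have "(Inr (r i), w i, Inr (r (Suc i))) \<in> Tr" for i
          using r(2) unfolding Tr_def by (rule_tac UnI2) (rule image_eqI[where x="(r i, w i, r (Suc i))"], auto)
        ultimately show ?thesis using r(1) unfolding glang_def
          by (intro CollectI exI[of _ "Inr \<circ> r"]) (auto simp: I_def)
      qed
    qed
  qed
  then show ?thesis using to_nat[OF g, of F] by auto
qed



lemma glang_lasso:
  assumes g: "gfin S I Tr" and w: "w \<in> glang I Tr Fs"
  shows "\<exists>w'. lasso w' \<and> w' \<in> glang I Tr Fs"
proof -
  obtain \<rho> where r: "\<rho> 0 \<in> I" "\<forall>i. (\<rho> i, w i, \<rho> (Suc i)) \<in> Tr" "\<forall>F\<in>set Fs. \<exists>\<^sub>\<infinity>i. \<rho> i \<in> F"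
    using w unfolding glang_def by blast
  have rS: "\<rho> i \<in> S" for i using run_in_S[OF g r(1,2)] .
  have fS: "finite S" using g by (simp add: gfin_def)
  have T: "\<exists>\<^sub>\<infinity>i::nat. True" by simp
  have "\<exists>\<^sub>\<infinity>i. \<exists>q\<in>S. \<rho> i = q" using T by (rule INFM_mono) (use rS in blast)
  then have "\<exists>q\<in>S. \<exists>\<^sub>\<infinity>i. \<rho> i = q" by (simp only: INFM_finite_Bex_distrib[OF fS])
  then obtain q where q: "q \<in> S" "\<exists>\<^sub>\<infinity>i. \<rho> i = q" by blast
  obtain i0 where i0: "\<rho> i0 = q" using INFM_EX[OF q(2)] by blast
  define tF where "tF F = (SOME t. t \<ge> i0 \<and> \<rho> t \<in> F)" for F
  have tF: "tF F \<ge> i0 \<and> \<rho> (tF F) \<in> F" if "F \<in> set Fs" for F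
  proof -
    have "\<exists>t\<ge>i0. \<rho> t \<in> F" using r(3) that unfolding INFM_nat_le by blast
    then have "\<exists>t. t \<ge> i0 \<and> \<rho> t \<in> F" by blast
    from someI_ex[OF this] show ?thesis unfolding tF_def .
  qed
  define M where "M = Max (insert i0 (tF ` set Fs))"
  have M: "i0 \<le> M" "\<And>F. F \<in> set Fs \<Longrightarrow> tF F \<le> M" unfolding M_def
    by (simp_all add: Max_ge)
  have "\<exists>j>M. \<rho> j = q" using q(2) unfolding INFM_nat by blast
  then obtain j where j: "j > M" "\<rho> j = q" by blast
  define p where "p = j - i0"
  have p: "0 < p" "i0 + p = j" using j M by (auto simp: p_def)
  define f where "f = lf i0 p"
  have run: "(\<rho> (f k), w (f k), \<rho> (f (Suc k))) \<in> Tr" for k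
  proof -
    have "\<rho> (f (Suc k)) = \<rho> (Suc (f k))"
      using lf_Suc[OF p(1), of i0 k] p(2) j(2) i0 by (auto simp: f_def)
    then show ?thesis using r(2) by simp
  qed
  have acc: "\<exists>\<^sub>\<infinity>k. \<rho> (f k) \<in> F" if F: "F \<in> set Fs" for F
    unfolding INFM_nat
  proof
    fix m
    have t: "i0 \<le> tF F" "tF F < i0 + p" using tF[OF F] M(2)[OF F] j(1) p(2) by auto
    have "f (tF F + Suc m * p) = tF F" unfolding f_def using lf_hit[OF t] .
    moreover have "tF F + Suc m * p > m"
    proof -
      have "Suc m * 1 \<le> Suc m * p" using p(1) by (intro mult_le_mono2) simp
      then show ?thesis by simp
    qed
    ultimately show "\<exists>n>m. \<rho> (f n) \<in> F" using tF[OF F] by metis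
  qed
  have "w \<circ> f \<in> glang I Tr Fs" unfolding glang_def
    using r(1) run acc by (intro CollectI exI[of _ "\<rho> \<circ> f"]) (simp add: f_def lf_0)
  moreover have "lasso (w \<circ> f)" unfolding lasso_def
    using p(1) lf_periodic[of i0] by (intro exI[of _ i0] exI[of _ p]) (simp add: f_def)
  ultimately show ?thesis by blast
qed

lemma counter_fwd:
  fixes n :: "nat \<Rightarrow> nat" and h :: "nat \<Rightarrow> nat \<Rightarrow> bool"
  assumes m: "0 < m" and bnd: "\<forall>t. n t < m"
    and step: "\<forall>t. n (Suc t) = (if h t (n t) then Suc (n t) mod m else n t)"
    and all: "\<forall>k<m. \<exists>\<^sub>\<infinity>t. h t k"
  shows "\<exists>\<^sub>\<infinity>t. n t = 0 \<and> h t 0"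
proof -
  have L1: "\<exists>t'\<ge>t. h t' (n t') \<and> n t' = n t" for t
  proof -
    let ?k = "n t"
    have "\<exists>\<^sub>\<infinity>u. h u ?k" using all bnd by auto
    then have "\<exists>u\<ge>t. h u ?k" unfolding INFM_nat_le by blast
    then obtain u where u: "u \<ge> t" "h u ?k" by blast
    define t' where "t' = (LEAST u. u \<ge> t \<and> h u ?k)"
    have t': "t' \<ge> t" "h t' ?k" using LeastI[of "\<lambda>u. u \<ge> t \<and> h u ?k" u] u unfolding t'_def by auto
    have min: "\<not> h v ?k" if "t \<le> v" "v < t'" for v
      using not_less_Least[of v "\<lambda>u. u \<ge> t \<and> h u ?k"] that unfolding t'_def by auto
    have "t + d \<le> t' \<longrightarrow> n (t + d) = ?k" for d
    proof (induction d)
      case (Suc d)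
      show ?case
      proof
        assume "t + Suc d \<le> t'"
        then have "\<not> h (t + d) ?k" "n (t + d) = ?k" using min[of "t + d"] Suc by auto
        then show "n (t + Suc d) = ?k" using step[rule_format, of "t + d"] by simp
      qed
    qed simp
    then have "n t' = ?k" using t'(1) by (metis le_add_diff_inverse order_refl)
    then show ?thesis using t' by auto
  qed
  have L2: "\<exists>t'\<ge>t. n t' = (n t + d) mod m" for d t
  proof (induction d)
    case 0 then show ?case using bnd by auto
  next
    case (Suc d)
    then obtain t1 where t1: "t1 \<ge> t" "n t1 = (n t + d) mod m" by blast
    obtain t2 where t2: "t2 \<ge> t1" "h t2 (n t2)" "n t2 = n t1" using L1 by blast
    have "n (Suc t2) = Suc ((n t + d) mod m) mod m" using step t2 t1 by simp
    also have "\<dots> = (n t + Suc d) mod m" by (simp add: mod_Suc_eq)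
    finally show ?case using t1 t2 by (intro exI[of _ "Suc t2"]) auto
  qed
  show ?thesis unfolding INFM_nat_le
  proof
    fix t0
    obtain t1 where t1: "t1 \<ge> t0" "n t1 = (n t0 + (m - n t0)) mod m" using L2 by blast
    then have "n t1 = 0" using bnd[rule_format, of t0] by simp
    then obtain t2 where "t2 \<ge> t1" "h t2 (n t2)" "n t2 = 0" using L1[of t1] by auto
    then show "\<exists>t\<ge>t0. n t = 0 \<and> h t 0" using t1 by (intro exI[of _ t2]) auto
  qed
qed

lemma counter_bwd:
  fixes n :: "nat \<Rightarrow> nat" and h :: "nat \<Rightarrow> nat \<Rightarrow> bool"
  assumes m: "0 < m" and bnd: "\<forall>t. n t < m"
    and step: "\<forall>t. n (Suc t) = (if h t (n t) then Suc (n t) mod m else n t)"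
    and acc: "\<exists>\<^sub>\<infinity>t. n t = 0 \<and> h t 0"
  shows "\<forall>k<m. \<exists>\<^sub>\<infinity>t. h t k"
proof (intro allI impI)
  fix k assume k: "k < m"
  show "\<exists>\<^sub>\<infinity>t. h t k"
  proof (rule ccontr)
    assume "\<not> (\<exists>\<^sub>\<infinity>t. h t k)"
    then obtain N where N: "\<And>t. t \<ge> N \<Longrightarrow> \<not> h t k" unfolding not_INFM MOST_nat_le by blast
    have acc': "\<exists>t\<ge>t0. n t = 0 \<and> h t 0" for t0 using acc unfolding INFM_nat_le by blast
    have stuck: "n (t + d) = k" if "t \<ge> N" "n t = k" for t d
    proof (induction d)
      case (Suc d) then show ?case using step[rule_format, of "t + d"] N[of "t + d"] that by simp
    qed (use that in simp)
    show False
    proof (cases "k = 0")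
      case True
      then show False using acc'[of N] N by blast
    next
      case False
      have reach: "1 \<le> j \<longrightarrow> j \<le> k \<longrightarrow> (\<exists>t\<ge>N. n t = j)" for j
      proof (induction j)
        case (Suc j)
        show ?case
        proof (intro impI)
          assume jk: "Suc j \<le> k"
          show "\<exists>t\<ge>N. n t = Suc j"
          proof (cases "j = 0")
            case True
            obtain t0 where t0: "t0 \<ge> N" "n t0 = 0" "h t0 0" using acc'[of N] by blast
            have "n (Suc t0) = Suc 0 mod m" using step t0 by simp
            also have "\<dots> = 1" using k jk True by simp
            finally show ?thesis using t0 True by (intro exI[of _ "Suc t0"]) auto
          next
            case False
            then obtain t where t: "t \<ge> N" "n t = j" using Suc jk by auto
            obtain t'' where t'': "t'' \<ge> t" "n t'' = 0" using acc'[of t] by blast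
            have ex: "n (t + (t'' - t)) \<noteq> j" using t'' False by simp
            define u where "u = (LEAST u. n (t + u) \<noteq> j)"
            have u: "n (t + u) \<noteq> j" using LeastI[of "\<lambda>u. n (t + u) \<noteq> j", OF ex] unfolding u_def .
            have "u \<noteq> 0" using u t by (metis add_0_right)
            then obtain u' where u': "u = Suc u'" by (cases u) auto
            have "n (t + u') = j" using not_less_Least[of u' "\<lambda>u. n (t + u) \<noteq> j"] u' unfolding u_def by auto
            then have "n (t + u) = Suc j mod m" using step[rule_format, of "t + u'"] u u' by (auto split: if_splits)
            also have "\<dots> = Suc j" using jk k by simp
            finally show ?thesis using t by (intro exI[of _ "t + u"]) auto
          qed
        qed
      qed simp
      obtain t where t: "t \<ge> N" "n t = k" using reach[of k] False by auto
      obtain t'' where t'': "t'' \<ge> t" "n t'' = 0" using acc'[of t] by blast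
      have "n (t + (t'' - t)) = k" using stuck[OF t] .
      then show False using t'' False by simp
    qed
  qed
qed



lemma glang_UNIV: "glang I Tr (UNIV # Fs) = glang I Tr Fs"
  by (simp add: glang_def)

lemma degen:
  fixes Tr :: "('s \<times> 'a set \<times> 's) set"
  assumes g: "gfin S I Tr"
  shows "\<exists>A. buchi_wf A \<and> lang A = glang I Tr Fs"
proof -
  define Gs where "Gs = UNIV # Fs"
  define m where "m = length Gs"
  have m: "0 < m" by (simp add: m_def Gs_def)
  define S' where "S' = S \<times> {..<m}"
  define I' where "I' = I \<times> {0::nat}"
  define Tr' :: "(('s \<times> nat) \<times> 'a set \<times> ('s \<times> nat)) set" where
    "Tr' = {((s, n), a, (s', n')). (s, a, s') \<in> Tr \<and> n < m \<and>
        n' = (if s \<in> Gs ! n then Suc n mod m else n)}"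
  define F' where "F' = {(s, n). n = (0::nat) \<and> s \<in> Gs ! 0}"
  have g': "gfin S' I' Tr'" using g m unfolding gfin_def S'_def I'_def Tr'_def by auto
  have "glang I' Tr' [F'] = glang I Tr Gs"
  proof
    show "glang I' Tr' [F'] \<subseteq> glang I Tr Gs"
    proof
      fix w assume "w \<in> glang I' Tr' [F']"
      then obtain \<rho> where r: "\<rho> 0 \<in> I'" "\<forall>i. (\<rho> i, w i, \<rho> (Suc i)) \<in> Tr'" "\<exists>\<^sub>\<infinity>i. \<rho> i \<in> F'"
        unfolding glang_def by auto
      define s where "s i = fst (\<rho> i)" for i
      define n where "n i = snd (\<rho> i)" for i
      have e: "\<rho> i = (s i, n i)" for i by (simp add: s_def n_def)
      have tr: "(s i, w i, s (Suc i)) \<in> Tr" "n i < m"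
         "n (Suc i) = (if s i \<in> Gs ! (n i) then Suc (n i) mod m else n i)" for i
        using r(2)[rule_format, of i] unfolding e Tr'_def by auto
      have "\<forall>k<m. \<exists>\<^sub>\<infinity>t. s t \<in> Gs ! k"
      proof (rule counter_bwd[OF m, of n])
        show "\<forall>t. n t < m" using tr by blast
        show "\<forall>t. n (Suc t) = (if s t \<in> Gs ! (n t) then Suc (n t) mod m else n t)" using tr by blast
        show "\<exists>\<^sub>\<infinity>t. n t = 0 \<and> s t \<in> Gs ! 0" using r(3)
          by (rule INFM_mono) (simp add: e F'_def)
      qed
      then have "\<forall>F\<in>set Gs. \<exists>\<^sub>\<infinity>t. s t \<in> F" unfolding m_def by (metis in_set_conv_nth)
      moreover have "s 0 \<in> I" using r(1) e[of 0] by (simp add: I'_def)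
      ultimately show "w \<in> glang I Tr Gs" unfolding glang_def using tr(1) by blast
    qed
  next
    show "glang I Tr Gs \<subseteq> glang I' Tr' [F']"
    proof
      fix w assume "w \<in> glang I Tr Gs"
      then obtain s where r: "s 0 \<in> I" "\<forall>i. (s i, w i, s (Suc i)) \<in> Tr" "\<forall>F\<in>set Gs. \<exists>\<^sub>\<infinity>i. s i \<in> F"
        unfolding glang_def by blast
      define n where "n = rec_nat (0::nat) (\<lambda>t k. if s t \<in> Gs ! k then Suc k mod m else k)"
      have n0: "n 0 = 0" by (simp add: n_def)
      have nS: "\<forall>t. n (Suc t) = (if s t \<in> Gs ! (n t) then Suc (n t) mod m else n t)"
        by (simp add: n_def)
      have bnd: "\<forall>t. n t < m"
      proof
        fix t show "n t < m" by (induction t) (use m nS n0 in auto)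
      qed
      have all: "\<forall>k<m. \<exists>\<^sub>\<infinity>t. s t \<in> Gs ! k" using r(3) unfolding m_def by simp
      have acc: "\<exists>\<^sub>\<infinity>t. n t = 0 \<and> s t \<in> Gs ! 0" by (rule counter_fwd[OF m bnd nS all])
      have "\<exists>\<^sub>\<infinity>t. (s t, n t) \<in> F'" using acc by (rule INFM_mono) (simp add: F'_def)
      moreover have "((s t, n t), w t, (s (Suc t), n (Suc t))) \<in> Tr'" for t
        using r(2) bnd nS unfolding Tr'_def by simp
      moreover have "(s 0, n 0) \<in> I'" using r(1) n0 by (simp add: I'_def)
      ultimately show "w \<in> glang I' Tr' [F']" unfolding glang_def
        by (intro CollectI exI[of _ "\<lambda>t. (s t, n t)"]) simp
    qed
  qed
  then show ?thesis using to_nat[OF g', of F'] glang_UNIV[of I Tr Fs] unfolding Gs_def by auto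
qed



fun lc :: "'a ltl \<Rightarrow> 'a ltl set \<Rightarrow> 'a set \<Rightarrow> 'a ltl set \<Rightarrow> bool" where
  "lc LBot T a T' = False"
| "lc (LProp p) T a T' = (p \<in> a)"
| "lc (LNeg x) T a T' = (x \<notin> T)"
| "lc (LOr x y) T a T' = (x \<in> T \<or> y \<in> T)"
| "lc (LNext x) T a T' = (x \<in> T')"
| "lc (LUntil x y) T a T' = (y \<in> T \<or> (x \<in> T \<and> LUntil x y \<in> T'))"

fun ful :: "'a ltl \<Rightarrow> 'a ltl set \<Rightarrow> bool" where
  "ful (LUntil x y) T = (LUntil x y \<notin> T \<or> y \<in> T)"
| "ful _ T = True"

definition PI :: "'a buchi \<Rightarrow> 'a ltl \<Rightarrow> (nat \<times> 'a ltl set) set" where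
  "PI B \<chi> = {(q, T). q \<in> binit B \<and> T \<subseteq> sf \<chi> \<and> \<chi> \<in> T}"

definition PT :: "'a buchi \<Rightarrow> 'a ltl \<Rightarrow> ((nat \<times> 'a ltl set) \<times> 'a set \<times> (nat \<times> 'a ltl set)) set" where
  "PT B \<chi> = {((q, T), a, (q', T')). (q, a, q') \<in> btrans B \<and> T \<subseteq> sf \<chi> \<and> T' \<subseteq> sf \<chi>
      \<and> (\<forall>\<psi>\<in>sf \<chi>. \<psi> \<in> T \<longleftrightarrow> lc \<psi> T a T')}"

definition PF :: "'a buchi \<Rightarrow> 'a ltl \<Rightarrow> (nat \<times> 'a ltl set) set list" where
  "PF B \<chi> = {(q, T). q \<in> bacc B} # map (\<lambda>\<psi>. {(q, T). ful \<psi> T}) (sfl \<chi>)"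

lemma until_seq:
  assumes st: "\<forall>n. u n \<longleftrightarrow> b n \<or> (a n \<and> u (Suc n))" and inf: "\<exists>\<^sub>\<infinity>n. \<not> u n \<or> b n"
  shows "u i \<longleftrightarrow> (\<exists>k. b (i + k) \<and> (\<forall>j<k. a (i + j)))"
proof
  assume ui: "u i"
  have "\<exists>n\<ge>i. \<not> u n \<or> b n" using inf unfolding INFM_nat_le by blast
  then obtain n where "n \<ge> i" "\<not> u n \<or> b n" by blast
  then have ex: "\<not> u (i + (n - i)) \<or> b (i + (n - i))" by simp
  define k where "k = (LEAST d. \<not> u (i + d) \<or> b (i + d))"
  have kk: "\<not> u (i + k) \<or> b (i + k)" unfolding k_def by (rule LeastI[of "\<lambda>d. \<not> u (i + d) \<or> b (i + d)", OF ex])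
  have before: "u (i + d) \<and> \<not> b (i + d)" if "d < k" for d
    using not_less_Least[of d "\<lambda>d. \<not> u (i + d) \<or> b (i + d)"] that unfolding k_def by blast
  have allu: "d \<le> k \<longrightarrow> u (i + d)" for d
  proof (induction d)
    case 0 then show ?case using ui by simp
  next
    case (Suc d)
    show ?case
    proof
      assume "Suc d \<le> k"
      then have "u (i + d) \<and> \<not> b (i + d)" using before[of d] by simp
      then show "u (i + Suc d)" using st[rule_format, of "i + d"] by auto
    qed
  qed
  have "b (i + k)" using kk allu[of k] by simp
  moreover have "a (i + j)" if "j < k" for j
    using before[OF that] st[rule_format, of "i + j"] by auto
  ultimately show "\<exists>k. b (i + k) \<and> (\<forall>j<k. a (i + j))" by blast
next
  assume "\<exists>k. b (i + k) \<and> (\<forall>j<k. a (i + j))"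
  then obtain k where k: "b (i + k)" "\<forall>j<k. a (i + j)" by blast
  then show "u i"
  proof (induction k arbitrary: i)
    case 0 then show ?case using st[rule_format, of i] by simp
  next
    case (Suc k)
    have "\<forall>j<k. a (Suc i + j)" using Suc.prems(2) by auto
    then have "u (Suc i)" using Suc.IH[of "Suc i"] Suc.prems(1) by simp
    moreover have "a i" using Suc.prems(2)[rule_format, of 0] by simp
    ultimately show ?case using st[rule_format, of i] by blast
  qed
qed

lemma prod_sound:
  assumes run: "\<forall>i. (\<rho> i, w i, \<rho> (Suc i)) \<in> PT B \<chi>"
    and acc: "\<forall>F\<in>set (PF B \<chi>). \<exists>\<^sub>\<infinity>i. \<rho> i \<in> F"
  shows "\<psi> \<in> sf \<chi> \<Longrightarrow> (\<psi> \<in> snd (\<rho> i) \<longleftrightarrow> sat (suffix i w) \<psi>)"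
proof (induction \<psi> arbitrary: i)
  define T where "T i = snd (\<rho> i)" for i
  have loc: "\<And>\<psi> i. \<psi> \<in> sf \<chi> \<Longrightarrow> \<psi> \<in> T i \<longleftrightarrow> lc \<psi> (T i) (w i) (T (Suc i))"
  proof -
    fix \<psi> i assume "\<psi> \<in> sf \<chi>"
    obtain q T0 q' T1 where "\<rho> i = (q, T0)" "\<rho> (Suc i) = (q', T1)" by fastforce
    then show "\<psi> \<in> T i \<longleftrightarrow> lc \<psi> (T i) (w i) (T (Suc i))"
      using run[rule_format, of i] \<open>\<psi> \<in> sf \<chi>\<close> unfolding PT_def T_def by auto
  qed
  {
    case LBot then show ?case using loc[of LBot i] by (simp add: T_def)
  next
    case (LProp p) then show ?case using loc[of "LProp p" i] by (simp add: T_def)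
  next
    case (LNeg x) then show ?case using loc[of "LNeg x" i] sf_sub(1)[of x \<chi>] by (simp add: T_def)
  next
    case (LOr x y) then show ?case using loc[of "LOr x y" i] sf_sub(2,3)[of x y \<chi>] by (simp add: T_def)
  next
    case (LNext x) then show ?case using loc[of "LNext x" i] sf_sub(4)[of x \<chi>] by (simp add: T_def)
  next
    case (LUntil x y)
    have xs: "x \<in> sf \<chi>" "y \<in> sf \<chi>" using sf_sub(5,6)[OF LUntil.prems] by auto
    have st: "\<forall>n. LUntil x y \<in> T n \<longleftrightarrow> y \<in> T n \<or> (x \<in> T n \<and> LUntil x y \<in> T (Suc n))"
    proof
      fix n show "LUntil x y \<in> T n \<longleftrightarrow> y \<in> T n \<or> (x \<in> T n \<and> LUntil x y \<in> T (Suc n))"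
        using loc[OF LUntil.prems, of n] by (simp only: lc.simps)
    qed
    have "{(q, T). ful (LUntil x y) T} \<in> set (PF B \<chi>)"
      using LUntil.prems unfolding PF_def sf_def
      by (intro list.set_intros(2)) (simp only: set_map, rule imageI)
    then have "\<exists>\<^sub>\<infinity>n. \<rho> n \<in> {(q, T). ful (LUntil x y) T}" using acc by blast
    then have inf: "\<exists>\<^sub>\<infinity>n. \<not> LUntil x y \<in> T n \<or> y \<in> T n"
      by (rule INFM_mono) (auto simp: T_def split: prod.splits)
    have "LUntil x y \<in> T i \<longleftrightarrow> (\<exists>k. y \<in> T (i + k) \<and> (\<forall>j<k. x \<in> T (i + j)))"
      by (rule until_seq[OF st inf])
    also have "\<dots> \<longleftrightarrow> (\<exists>k. sat (suffix (i + k) w) y \<and> (\<forall>j<k. sat (suffix (i + j) w) x))"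
      using LUntil.IH xs by (simp add: T_def)
    finally show ?case by (simp add: T_def)
  }
qed

lemma prod_complete:
  assumes "w \<in> lang B" "sat w \<chi>"
  shows "w \<in> glang (PI B \<chi>) (PT B \<chi>) (PF B \<chi>)"
proof -
  obtain r where r: "r 0 \<in> binit B" "\<forall>i. (r i, w i, r (Suc i)) \<in> btrans B" "\<exists>\<^sub>\<infinity>i. r i \<in> bacc B"
    using assms(1) unfolding lang_def by blast
  define T where "T i = {\<psi> \<in> sf \<chi>. sat (suffix i w) \<psi>}" for i
  have loc: "\<psi> \<in> T i \<longleftrightarrow> lc \<psi> (T i) (w i) (T (Suc i))" if "\<psi> \<in> sf \<chi>" for \<psi> i
  proof (cases \<psi>)
    case (LUntil x y)
    then show ?thesis using that sf_sub(5,6)[of x y \<chi>] sat_until_unfold[of "suffix i w" x y]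
      by (simp add: T_def)
  next
    case LBot then show ?thesis by (simp add: T_def)
  next
    case (LProp p) then show ?thesis using that by (simp add: T_def)
  next
    case (LNeg x) then show ?thesis using that sf_sub(1)[of x \<chi>] by (simp add: T_def)
  next
    case (LOr x y) then show ?thesis using that sf_sub(2,3)[of x y \<chi>] by (auto simp: T_def)
  next
    case (LNext x) then show ?thesis using that sf_sub(4)[of x \<chi>] by (simp add: T_def)
  qed
  have trans: "((r i, T i), w i, (r (Suc i), T (Suc i))) \<in> PT B \<chi>" for i
    unfolding PT_def using r(2) loc by (auto simp: T_def)
  have init: "(r 0, T 0) \<in> PI B \<chi>" unfolding PI_def T_def using r(1) assms(2)
    by (simp add: suffix_def)
  have acc: "\<exists>\<^sub>\<infinity>i. (r i, T i) \<in> F" if F: "F \<in> set (PF B \<chi>)" for F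
  proof -
    consider "F = {(q, T). q \<in> bacc B}" | \<psi> where "\<psi> \<in> sf \<chi>" "F = {(q, T). ful \<psi> T}"
      using F unfolding PF_def sf_def by auto
    then show ?thesis
    proof cases
      case 1 then show ?thesis using r(3) by simp
    next
      case 2
      show ?thesis
      proof (cases \<psi>)
        case (LUntil x y)
        show ?thesis unfolding INFM_nat_le
        proof
          fix N
          show "\<exists>n\<ge>N. (r n, T n) \<in> F"
          proof (cases "sat (suffix N w) \<psi>")
            case True
            then obtain k where "sat (suffix (N + k) w) y" using LUntil by auto
            then show ?thesis using 2 LUntil sf_sub(6)[of x y \<chi>]
              by (intro exI[of _ "N + k"]) (simp add: T_def)
          next
            case False
            then have "LUntil x y \<notin> T N" using LUntil by (simp add: T_def del: sat.simps)
            then show ?thesis using 2 LUntil by (intro exI[of _ N]) simp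
          qed
        qed
      qed (use 2 in simp_all)
    qed
  qed
  show ?thesis unfolding glang_def using init trans acc
    by (intro CollectI exI[of _ "\<lambda>i. (r i, T i)"]) simp
qed

lemma prod_gfin: "buchi_wf B \<Longrightarrow> gfin (bstates B \<times> Pow (sf \<chi>)) (PI B \<chi>) (PT B \<chi>)"
  unfolding gfin_def buchi_wf_def PI_def PT_def by auto

lemma prod_lang:
  assumes "buchi_wf B"
  shows "glang (PI B \<chi>) (PT B \<chi>) (PF B \<chi>) = lang B \<inter> {w. sat w \<chi>}"
proof
  show "glang (PI B \<chi>) (PT B \<chi>) (PF B \<chi>) \<subseteq> lang B \<inter> {w. sat w \<chi>}"
  proof
    fix w assume "w \<in> glang (PI B \<chi>) (PT B \<chi>) (PF B \<chi>)"
    then obtain \<rho> where r: "\<rho> 0 \<in> PI B \<chi>" "\<forall>i. (\<rho> i, w i, \<rho> (Suc i)) \<in> PT B \<chi>"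
      "\<forall>F\<in>set (PF B \<chi>). \<exists>\<^sub>\<infinity>i. \<rho> i \<in> F" unfolding glang_def by blast
    have "\<chi> \<in> snd (\<rho> 0)" using r(1) by (auto simp: PI_def)
    then have "sat (suffix 0 w) \<chi>" using prod_sound[OF r(2,3)] by auto
    then have s: "sat w \<chi>" by (simp add: suffix_def)
    have "fst (\<rho> 0) \<in> binit B" using r(1) by (auto simp: PI_def)
    moreover have "(fst (\<rho> i), w i, fst (\<rho> (Suc i))) \<in> btrans B" for i
      using r(2)[rule_format, of i] by (auto simp: PT_def split: prod.splits)
    moreover have "\<exists>\<^sub>\<infinity>i. fst (\<rho> i) \<in> bacc B" using r(3)[rule_format, of "{(q, T). q \<in> bacc B}"]
      by (simp add: PF_def case_prod_beta)
    ultimately have "w \<in> lang B" unfolding lang_def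
      by (intro CollectI exI[of _ "\<lambda>i. fst (\<rho> i)"]) simp
    then show "w \<in> lang B \<inter> {w. sat w \<chi>}" using s by blast
  qed
next
  show "lang B \<inter> {w. sat w \<chi>} \<subseteq> glang (PI B \<chi>) (PT B \<chi>) (PF B \<chi>)"
    using prod_complete by blast
qed

lemma inter_ltl: "buchi_wf B \<Longrightarrow> \<exists>C. buchi_wf C \<and> lang C = lang B \<inter> {w. sat w \<chi>}"
  using degen[OF prod_gfin, of B \<chi> "PF B \<chi>"] prod_lang[of B \<chi>] by auto

lemma lasso_ltl:
  assumes "buchi_wf B" "w \<in> lang B" "sat w \<chi>"
  shows "\<exists>w'. lasso w' \<and> w' \<in> lang B \<and> sat w' \<chi>"
  using glang_lasso[OF prod_gfin[OF assms(1)], of w \<chi> "PF B \<chi>"] prod_lang[OF assms(1), of \<chi>] assms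
  by auto



lemma Cn_supp:
  assumes A: "buchi_wf A" shows "Cn (supp A) = supp A"
proof
  show "Cn (supp A) \<subseteq> supp A"
  proof
    fix \<phi> assume \<phi>: "\<phi> \<in> Cn (supp A)"
    show "\<phi> \<in> supp A" unfolding supp_def
    proof (rule CollectI, rule ballI, rule ccontr)
      fix \<pi> assume \<pi>: "\<pi> \<in> lang A" "\<not> sat \<pi> \<phi>"
      then have "sat \<pi> (LNeg \<phi>)" by simp
      then obtain w where w: "lasso w" "w \<in> lang A" "sat w (LNeg \<phi>)" using lasso_ltl[OF A \<pi>(1)] by blast
      have "\<forall>\<psi>\<in>supp A. sat w \<psi>" using w(2) unfolding supp_def by blast
      then have "sat w \<phi>" using lasso_Cn[OF w(1) _ \<phi>] by blast
      then show False using w(3) by simp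
    qed
  qed
qed (rule Cn_incl)

lemma taut_Cn: "(\<phi> :: 'a ltl) \<in> Cn {} \<longleftrightarrow> tautology \<phi>"
proof
  assume \<phi>: "\<phi> \<in> Cn {}"
  show "tautology \<phi>" unfolding tautology_def
  proof (rule allI, rule ccontr)
    fix \<pi> :: "'a trace" assume "\<not> sat \<pi> \<phi>"
    then have "sat \<pi> (LNeg \<phi>)" "\<pi> \<in> lang univA" using univA_lang by auto
    then obtain w where w: "lasso w" "sat w (LNeg \<phi>)" using lasso_ltl[OF univA_wf] by blast
    then have "sat w \<phi>" using lasso_Cn[OF w(1) _ \<phi>] by blast
    then show False using w by simp
  qed
next
  assume "tautology \<phi>" then show "\<phi> \<in> Cn {}" by (simp add: Cn_def kmodels_def tautology_def)
qed

lemma equiv_imp: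
  assumes e: "ltl_equiv \<phi> \<psi>" and s: "sat \<pi> \<phi>" shows "sat \<pi> \<psi>"
proof (rule ccontr)
  assume "\<not> sat \<pi> \<psi>"
  then have "sat \<pi> (LNeg (LOr (LNeg \<phi>) \<psi>))" "\<pi> \<in> lang univA" using s univA_lang by auto
  then obtain w where w: "lasso w" "sat w (LNeg (LOr (LNeg \<phi>) \<psi>))"
    using lasso_ltl[OF univA_wf] by blast
  have "\<psi> \<in> Cn {\<phi>}" using e Cn_incl[of "{\<psi>}"] unfolding ltl_equiv_def by auto
  moreover have "\<forall>\<chi>\<in>{\<phi>}. sat w \<chi>" using w(2) by simp
  ultimately have "sat w \<psi>" using lasso_Cn[OF w(1)] by blast
  then show False using w(2) by simp
qed

lemma equiv_sem: "ltl_equiv \<phi> \<psi> \<Longrightarrow> sat \<pi> \<phi> = sat \<pi> \<psi>"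
  using equiv_imp[of \<phi> \<psi> \<pi>] equiv_imp[of \<psi> \<phi> \<pi>] unfolding ltl_equiv_def by auto

lemma equiv_supp: "ltl_equiv \<phi> \<psi> \<Longrightarrow> (\<phi> \<in> supp A) = (\<psi> \<in> supp A)"
  using equiv_sem[of \<phi> \<psi>] unfolding supp_def by auto

lemma equiv_taut: "ltl_equiv \<phi> \<psi> \<Longrightarrow> tautology \<phi> = tautology \<psi>"
  using equiv_sem[of \<phi> \<psi>] unfolding tautology_def by auto

lemma Cn_mono_sub: "Cn X \<subseteq> Cn (X \<union> Y)"
  unfolding Cn_def by auto

lemma Cn_absorb: "\<phi> \<in> Cn {} \<Longrightarrow> Cn (X \<union> {\<phi>}) \<subseteq> Cn X"
  unfolding Cn_def by auto



lemma supp_union: "lang C = lang A \<union> lang B \<Longrightarrow> supp C = supp A \<inter> supp B"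
  unfolding supp_def by auto

lemma backward:
  fixes K :: "'a ltl set" and \<gamma> :: "'a ltl \<Rightarrow> 'a buchi"
  assumes A: "buchi_wf A" "K = supp A" and g: "buchi_choice \<gamma>"
  shows "rational_contraction K (buchi_contraction K \<gamma>) \<and> remains_in_E_Buchi (buchi_contraction K \<gamma>)"
proof -
  let ?c = "buchi_contraction K \<gamma>"
  have gwf: "buchi_wf (\<gamma> \<phi>)" "lang (\<gamma> \<phi>) \<noteq> {}"
    "\<not> tautology \<phi> \<Longrightarrow> LNeg \<phi> \<in> supp (\<gamma> \<phi>)"
    "ltl_equiv \<phi> \<psi> \<Longrightarrow> lang (\<gamma> \<phi>) = lang (\<gamma> \<psi>)" for \<phi> \<psi> :: "'a ltl"
    using g unfolding buchi_choice_def by blast+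
  have ex: "\<exists>D. buchi_wf D \<and> ?c \<phi> = supp D" for \<phi> :: "'a ltl"
  proof (cases "\<phi> \<notin> Cn {} \<and> \<phi> \<in> K")
    case True
    obtain D where "buchi_wf D" "lang D = lang A \<union> lang (\<gamma> \<phi>)" using union_buchi[OF A(1) gwf(1)] by blast
    then show ?thesis using True A(2) supp_union[of D A "\<gamma> \<phi>"] by (auto simp: buchi_contraction_def)
  next
    case False then show ?thesis using A by (auto simp: buchi_contraction_def)
  qed
  have rem: "remains_in_E_Buchi ?c" unfolding remains_in_E_Buchi_def E_Buchi_def using ex by blast
  have K1: "\<forall>\<phi>. ?c \<phi> = Cn (?c \<phi>)" using ex Cn_supp by metis
  have K2: "\<forall>\<phi>. ?c \<phi> \<subseteq> K" by (simp add: buchi_contraction_def)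
  have K3: "\<forall>\<phi>. \<phi> \<notin> K \<longrightarrow> ?c \<phi> = K" by (simp add: buchi_contraction_def)
  have K4: "\<forall>\<phi>. \<phi> \<notin> Cn {} \<longrightarrow> \<phi> \<notin> ?c \<phi>"
  proof (intro allI impI)
    fix \<phi> :: "'a ltl" assume n: "\<phi> \<notin> Cn {}"
    show "\<phi> \<notin> ?c \<phi>"
    proof (cases "\<phi> \<in> K")
      case True
      have nt: "\<not> tautology \<phi>" using n taut_Cn by blast
      obtain \<pi> where \<pi>: "\<pi> \<in> lang (\<gamma> \<phi>)" using gwf(2) by blast
      have "sat \<pi> (LNeg \<phi>)" using gwf(3)[OF nt] \<pi> unfolding supp_def by blast
      then have "\<phi> \<notin> supp (\<gamma> \<phi>)" using \<pi> unfolding supp_def by auto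
      then show ?thesis using True n by (simp add: buchi_contraction_def)
    next
      case False then show ?thesis by (simp add: buchi_contraction_def)
    qed
  qed
  have K5: "\<forall>\<phi>. K \<subseteq> expansion (?c \<phi>) \<phi>"
  proof
    fix \<phi> :: "'a ltl"
    show "K \<subseteq> expansion (?c \<phi>) \<phi>"
    proof (cases "\<phi> \<notin> Cn {} \<and> \<phi> \<in> K")
      case False
      then show ?thesis unfolding expansion_def using Cn_incl[of "K \<union> {\<phi>}"]
        by (auto simp: buchi_contraction_def)
    next
      case True
      have nt: "\<not> tautology \<phi>" using True taut_Cn by blast
      show ?thesis
      proof
        fix \<psi> assume \<psi>: "\<psi> \<in> K"
        have inK: "LOr (LNeg \<phi>) \<psi> \<in> K" using \<psi> A(2) unfolding supp_def by auto
        have inS: "LOr (LNeg \<phi>) \<psi> \<in> supp (\<gamma> \<phi>)" using gwf(3)[OF nt] unfolding supp_def by auto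
        have c: "?c \<phi> = K \<inter> supp (\<gamma> \<phi>)" using True by (simp add: buchi_contraction_def)
        show "\<psi> \<in> expansion (?c \<phi>) \<phi>" unfolding expansion_def c Cn_def
        proof (intro CollectI allI impI)
          fix M :: "'a kripke" assume M: "kripke_wf M \<and> (\<forall>\<chi>\<in>K \<inter> supp (\<gamma> \<phi>) \<union> {\<phi>}. kmodels M \<chi>)"
          then have "kmodels M (LOr (LNeg \<phi>) \<psi>)" "kmodels M \<phi>" using inK inS by auto
          then show "kmodels M \<psi>" unfolding kmodels_def by auto
        qed
      qed
    qed
  qed
  have K6: "\<forall>\<phi> \<psi>. ltl_equiv \<phi> \<psi> \<longrightarrow> ?c \<phi> = ?c \<psi>"
  proof (intro allI impI)
    fix \<phi> \<psi> :: "'a ltl" assume e: "ltl_equiv \<phi> \<psi>"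
    have "(\<phi> \<in> Cn {}) = (\<psi> \<in> Cn {})" using equiv_taut[OF e] taut_Cn by blast
    moreover have "(\<phi> \<in> K) = (\<psi> \<in> K)" using equiv_supp[OF e] A(2) by blast
    moreover have "supp (\<gamma> \<phi>) = supp (\<gamma> \<psi>)" using gwf(4)[OF e] unfolding supp_def by simp
    ultimately show "?c \<phi> = ?c \<psi>" unfolding buchi_contraction_def by simp
  qed
  show ?thesis unfolding rational_contraction_def using rem K1 K2 K3 K4 K5 K6 by blast
qed


definition Cof :: "'a buchi \<Rightarrow> 'a ltl \<Rightarrow> 'a buchi" where
  "Cof B \<chi> = (SOME C. buchi_wf C \<and> lang C = lang B \<inter> {w. sat w \<chi>})"

lemma Cof: "buchi_wf B \<Longrightarrow> buchi_wf (Cof B \<chi>) \<and> lang (Cof B \<chi>) = lang B \<inter> {w. sat w \<chi>}"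
  unfolding Cof_def by (rule someI_ex[OF inter_ltl])

lemma forward:
  fixes K :: "'a ltl set" and c :: "'a ltl \<Rightarrow> 'a ltl set"
  assumes A: "buchi_wf A" "K = supp A" and rc: "rational_contraction K c" and re: "remains_in_E_Buchi c"
  shows "\<exists>\<gamma>. buchi_choice \<gamma> \<and> c = buchi_contraction K \<gamma>"
proof -
  have K1: "\<And>\<phi>. c \<phi> = Cn (c \<phi>)" and K2: "\<And>\<phi>. c \<phi> \<subseteq> K" and K3: "\<And>\<phi>. \<phi> \<notin> K \<Longrightarrow> c \<phi> = K"
    and K4: "\<And>\<phi>. \<phi> \<notin> Cn {} \<Longrightarrow> \<phi> \<notin> c \<phi>" and K5: "\<And>\<phi>. K \<subseteq> expansion (c \<phi>) \<phi>"
    and K6: "\<And>\<phi> \<psi>. ltl_equiv \<phi> \<psi> \<Longrightarrow> c \<phi> = c \<psi>"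
    using rc unfolding rational_contraction_def by blast+
  define Bof where "Bof \<phi> = (SOME B. buchi_wf B \<and> c \<phi> = supp B)" for \<phi>
  have Bof: "buchi_wf (Bof \<phi>) \<and> c \<phi> = supp (Bof \<phi>)" for \<phi>
  proof -
    have "\<exists>B. buchi_wf B \<and> c \<phi> = supp B" using re unfolding remains_in_E_Buchi_def E_Buchi_def by blast
    then show ?thesis unfolding Bof_def by (rule someI_ex)
  qed
  define \<gamma> where "\<gamma> \<phi> = (if tautology \<phi> then univA else if \<phi> \<in> K then Cof (Bof \<phi>) (LNeg \<phi>)
     else Cof univA (LNeg \<phi>))" for \<phi>
  have wf: "buchi_wf (\<gamma> \<phi>)" for \<phi>
    unfolding \<gamma>_def using univA_wf Cof Bof by auto
  have neg: "lang (\<gamma> \<phi>) \<subseteq> {w. sat w (LNeg \<phi>)}" if "\<not> tautology \<phi>" for \<phi>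
    using that Cof[OF Bof[THEN conjunct1], of \<phi> "LNeg \<phi>"] Cof[OF univA_wf, of "LNeg \<phi>"]
    unfolding \<gamma>_def by auto
  have ne: "lang (\<gamma> \<phi>) \<noteq> {}" for \<phi>
  proof (cases "tautology \<phi>")
    case True then show ?thesis by (simp add: \<gamma>_def univA_lang)
  next
    case nt: False
    show ?thesis
    proof (cases "\<phi> \<in> K")
      case True
      have "\<phi> \<notin> c \<phi>" using K4 nt taut_Cn by blast
      then obtain \<pi> where "\<pi> \<in> lang (Bof \<phi>)" "\<not> sat \<pi> \<phi>" using Bof[of \<phi>] unfolding supp_def by auto
      then have "\<pi> \<in> lang (\<gamma> \<phi>)" using nt True Cof[of "Bof \<phi>" "LNeg \<phi>"] Bof[of \<phi>] by (simp add: \<gamma>_def)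
      then show ?thesis by blast
    next
      case False
      obtain \<pi> where "\<not> sat \<pi> \<phi>" using nt unfolding tautology_def by blast
      then have "\<pi> \<in> lang (\<gamma> \<phi>)" using nt False Cof[OF univA_wf, of "LNeg \<phi>"]
        by (simp add: \<gamma>_def univA_lang)
      then show ?thesis by blast
    qed
  qed
  have bf3: "lang (\<gamma> \<phi>) = lang (\<gamma> \<psi>)" if e: "ltl_equiv \<phi> \<psi>" for \<phi> \<psi>
  proof -
    have t: "tautology \<phi> = tautology \<psi>" using equiv_taut[OF e] .
    have k: "(\<phi> \<in> K) = (\<psi> \<in> K)" using equiv_supp[OF e] A(2) by blast
    have b: "Bof \<phi> = Bof \<psi>" unfolding Bof_def using K6[OF e] by simp
    have s: "{w. sat w (LNeg \<phi>)} = {w. sat w (LNeg \<psi>)}" using equiv_sem[OF e] by auto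
    show ?thesis
      using t k b s Cof[of "Bof \<phi>" "LNeg \<phi>"] Cof[of "Bof \<psi>" "LNeg \<psi>"] Bof[of \<phi>]
        Cof[OF univA_wf, of "LNeg \<phi>"] Cof[OF univA_wf, of "LNeg \<psi>"]
      unfolding \<gamma>_def by (cases "tautology \<phi>"; cases "\<phi> \<in> K") auto
  qed
  have choice: "buchi_choice \<gamma>" unfolding buchi_choice_def
  proof (intro conjI allI impI)
    show "buchi_wf (\<gamma> \<phi>)" for \<phi> by (rule wf)
    show "lang (\<gamma> \<phi>) \<noteq> {}" for \<phi> by (rule ne)
    show "LNeg \<phi> \<in> supp (\<gamma> \<phi>)" if "\<not> tautology \<phi>" for \<phi>
      using neg[OF that] unfolding supp_def by auto
    show "lang (\<gamma> \<phi>) = lang (\<gamma> \<psi>)" if "ltl_equiv \<phi> \<psi>" for \<phi> \<psi> using bf3[OF that] .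
  qed
  have eq: "c \<phi> = buchi_contraction K \<gamma> \<phi>" for \<phi>
  proof (cases "\<phi> \<in> Cn {}")
    case True
    have "K \<subseteq> Cn (c \<phi> \<union> {\<phi>})" using K5[of \<phi>] unfolding expansion_def .
    also have "\<dots> \<subseteq> Cn (c \<phi>)" using Cn_absorb[OF True] .
    also have "\<dots> = c \<phi>" using K1[of \<phi>] by simp
    finally have "c \<phi> = K" using K2[of \<phi>] by blast
    then show ?thesis using True by (simp add: buchi_contraction_def)
  next
    case nC: False
    show ?thesis
    proof (cases "\<phi> \<in> K")
      case False then show ?thesis using K3 by (simp add: buchi_contraction_def)
    next
      case inK: True
      have nt: "\<not> tautology \<phi>" using nC taut_Cn by blast
      define B where "B = Bof \<phi>"
      have B: "buchi_wf B" "c \<phi> = supp B" using Bof[of \<phi>] by (auto simp: B_def)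
      have g: "\<gamma> \<phi> = Cof B (LNeg \<phi>)" using nt inK by (simp add: \<gamma>_def B_def)
      have LC: "lang (\<gamma> \<phi>) = lang B \<inter> {w. sat w (LNeg \<phi>)}" using g Cof[OF B(1)] by simp
      have "supp B = K \<inter> supp (\<gamma> \<phi>)"
      proof
        show "supp B \<subseteq> K \<inter> supp (\<gamma> \<phi>)" using K2[of \<phi>] B(2) LC unfolding supp_def by auto
      next
        show "K \<inter> supp (\<gamma> \<phi>) \<subseteq> supp B"
        proof
          fix \<psi> assume \<psi>: "\<psi> \<in> K \<inter> supp (\<gamma> \<phi>)"
          show "\<psi> \<in> supp B" unfolding supp_def
          proof (rule CollectI, rule ballI)
            fix \<pi> assume \<pi>: "\<pi> \<in> lang B"
            show "sat \<pi> \<psi>"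
            proof (cases "sat \<pi> \<phi>")
              case False
              then have "\<pi> \<in> lang (\<gamma> \<phi>)" using LC \<pi> by simp
              then show ?thesis using \<psi> unfolding supp_def by blast
            next
              case True
              show ?thesis
              proof (rule ccontr)
                assume "\<not> sat \<pi> \<psi>"
                then have "sat \<pi> (LNeg (LOr (LNeg \<phi>) \<psi>))" using True by simp
                then obtain w where w: "lasso w" "w \<in> lang B" "sat w (LNeg (LOr (LNeg \<phi>) \<psi>))"
                  using lasso_ltl[OF B(1) \<pi>] by blast
                have "\<psi> \<in> Cn (c \<phi> \<union> {\<phi>})" using K5[of \<phi>] \<psi> unfolding expansion_def by blast
                moreover have "\<forall>\<chi>\<in>c \<phi> \<union> {\<phi>}. sat w \<chi>" using w B(2) unfolding supp_def by auto
                ultimately have "sat w \<psi>" using lasso_Cn[OF w(1)] by blast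
                then show False using w(3) by simp
              qed
            qed
          qed
        qed
      qed
      then show ?thesis using B(2) nC inK by (simp add: buchi_contraction_def)
    qed
  qed
  show ?thesis using choice eq by blast
qed


theorem mainTheorem16:
  fixes K :: "('ap::finite) ltl set"
    and c :: "'ap ltl \<Rightarrow> 'ap ltl set"
  assumes "K \<in> E_Buchi"
  shows "(rational_contraction K c \<and> remains_in_E_Buchi c) \<longleftrightarrow>
         (\<exists>\<gamma>. buchi_choice \<gamma> \<and> c = buchi_contraction K \<gamma>)"
proof -
  obtain A where A: "buchi_wf A" "K = supp A" using assms unfolding E_Buchi_def by blast
  show ?thesis
    using forward[OF A] backward[OF A] by blast
qed

end
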